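(* Let $\mathcal M$ be a companion-connected mixture of $L$ Markov chains on $n$ states, let $r=\sum_{\ell}|\mathcal C^\ell|$, let $R\in\mathbb R^{r\times r}$ be any invertible matrix, and for $k\in[n]$ put $R_{\mathrm{inv}(k)}=R^{-1}\Xi_k\in\mathbb R^{r\times L}$. Then for any states $i,j\in[n]$, the matrix $R_{\mathrm{inv}(j)}^\dagger R_{\mathrm{inv}(i)}\in\mathbb R^{L\times L}$ is the inverse of $R_{\mathrm{inv}(i)}^\dagger R_{\mathrm{inv}(j)}$ if and only if $\Xi_i=\Xi_j$ (i.e. $i$ and $j$ lie in the same connected component in every chain).
   Context: A mixture of $L$ Markov chains on $[n]$: row-stochastic $M^1,\dots,M^L\in\mathbb R^{n\times n}$ and starting vectors $s^\ell\in\mathbb R^n_{\ge0}$ with $\sum_{\ell,i}s^\ell_i=1$. For each $\ell$, $G^\ell$ is the undirected bipartite graph on $V^\pm=\{1^+,\dots,n^+,1^-,\dots,n^-\}$ with an edge $\{i^-,j^+\}$ whenever $M^\ell_{ij}>0$, and $\mathcal C^\ell$ is its set of connected components. The mixture is companion-connected if for each $j\in[n]$ there is $i\ne j$ such that for every $\ell$, $j^-$ and $i^-$ lie in the same component of $G^\ell$ as $j^+$ (so $j^+$ and $j^-$ are always in the same component; call it the component of chain $\ell$ containing $j$). Enumerate all components of all chains as $q=1,\dots,r$, $r=\sum_\ell|\mathcal C^\ell|$. For $j\in[n]$, $\Xi_j\in\{0,1\}^{r\times L}$ has $\Xi_j(q,\ell)=1$ iff the $q$-th component belongs to $\mathcal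 C^\ell$ and contains $j$, and $0$ otherwise. $A^\dagger$ denotes the Moore–Penrose pseudoinverse. *)

theory Defs
  imports "Jordan_Normal_Form.Matrix"
begin

(* States are 0..<n, chains are 0..<L.  A vertex of the bipartite graph is
   (i, True) = i^+ and (i, False) = i^-.  *)

definition vertices :: "nat \<Rightarrow> (nat \<times> bool) set" where
  "vertices n = {v. fst v < n}"

definition gedge :: "nat \<Rightarrow> real mat \<Rightarrow> nat \<times> bool \<Rightarrow> nat \<times> bool \<Rightarrow> bool" where
  "gedge n A u v \<longleftrightarrow>
     (\<exists>i j. i < n \<and> j < n \<and> A $$ (i, j) > 0 \<and>
        ((u = (i, False) \<and> v = (j, True)) \<or> (u = (j, True) \<and> v = (i, False))))"

definition gconn :: "nat \<Rightarrow> real mat \<Rightarrow> nat \<times> bool \<Rightarrow> nat \<times> bool \<Rightarrow> bool" where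
  "gconn n A u v \<longleftrightarrow> u \<in> vertices n \<and> v \<in> vertices n \<and> (gedge n A)\<^sup>*\<^sup>* u v"

definition components :: "nat \<Rightarrow> real mat \<Rightarrow> (nat \<times> bool) set set" where
  "components n A = (\<lambda>u. {v. gconn n A u v}) ` vertices n"

definition row_stochastic :: "nat \<Rightarrow> real mat \<Rightarrow> bool" where
  "row_stochastic n A \<longleftrightarrow> A \<in> carrier_mat n n \<and>
     (\<forall>i<n. \<forall>j<n. A $$ (i, j) \<ge> 0) \<and> (\<forall>i<n. (\<Sum>j<n. A $$ (i, j)) = 1)"

definition mixture :: "nat \<Rightarrow> nat \<Rightarrow> (nat \<Rightarrow> real mat) \<Rightarrow> (nat \<Rightarrow> nat \<Rightarrow> real) \<Rightarrow> bool" where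
  "mixture n L M s \<longleftrightarrow> (\<forall>l<L. row_stochastic n (M l)) \<and>
     (\<forall>l<L. \<forall>i<n. s l i \<ge> 0) \<and> (\<Sum>l<L. \<Sum>i<n. s l i) = 1"

definition companion_connected :: "nat \<Rightarrow> nat \<Rightarrow> (nat \<Rightarrow> real mat) \<Rightarrow> bool" where
  "companion_connected n L M \<longleftrightarrow>
     (\<forall>j<n. \<exists>i<n. i \<noteq> j \<and> (\<forall>l<L.
        gconn n (M l) (j, True) (j, False) \<and> gconn n (M l) (j, True) (i, False)))"

(* all (chain, component) pairs; an enumeration q = 0..<r of them is a bijection onto this set *)
definition all_components :: "nat \<Rightarrow> nat \<Rightarrow> (nat \<Rightarrow> real mat) \<Rightarrow> (nat \<times> (nat \<times> bool) set) set" where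
  "all_components n L M = {(l, C). l < L \<and> C \<in> components n (M l)}"

definition Xi :: "nat \<Rightarrow> nat \<Rightarrow> (nat \<Rightarrow> nat \<times> (nat \<times> bool) set) \<Rightarrow> nat \<Rightarrow> real mat" where
  "Xi r L enum j = mat r L (\<lambda>(q, l). if fst (enum q) = l \<and> (j, True) \<in> snd (enum q) then 1 else 0)"

(* Moore-Penrose pseudoinverse (real matrices: conjugate transpose = transpose) *)
definition pinv :: "real mat \<Rightarrow> real mat" where
  "pinv A = (THE X. X \<in> carrier_mat (dim_col A) (dim_row A) \<and>
      A * X * A = A \<and> X * A * X = X \<and>
      transpose_mat (A * X) = A * X \<and> transpose_mat (X * A) = X * A)"

definition mat_inv :: "real mat \<Rightarrow> real mat" where
  "mat_inv R = (THE B. B \<in> carrier_mat (dim_row R) (dim_row R) \<and>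
      R * B = 1\<^sub>m (dim_row R) \<and> B * R = 1\<^sub>m (dim_row R))"

definition is_inverse_of :: "nat \<Rightarrow> real mat \<Rightarrow> real mat \<Rightarrow> bool" where
  "is_inverse_of k X A \<longleftrightarrow> X \<in> carrier_mat k k \<and> A \<in> carrier_mat k k \<and>
      X * A = 1\<^sub>m k \<and> A * X = 1\<^sub>m k"

end

theory Submission
  imports Defs "Jordan_Normal_Form.Determinant"
begin


lemma gedge_sym: "gedge n A u v \<Longrightarrow> gedge n A v u"
  unfolding gedge_def by blast

lemma rt_sym: "(gedge n A)\<^sup>*\<^sup>* u v \<Longrightarrow> (gedge n A)\<^sup>*\<^sup>* v u"
  by (induction rule: rtranclp_induct) (auto intro: converse_rtranclp_into_rtranclp gedge_sym)

lemma gconn_sym: "gconn n A u v \<Longrightarrow> gconn n A v u"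
  unfolding gconn_def using rt_sym by blast

lemma gconn_trans: "gconn n A u v \<Longrightarrow> gconn n A v w \<Longrightarrow> gconn n A u w"
  unfolding gconn_def by (meson rtranclp_trans)

lemma gconn_refl: "u \<in> vertices n \<Longrightarrow> gconn n A u u"
  unfolding gconn_def by auto

lemma comp_iff: "C \<in> components n A \<Longrightarrow> gconn n A x y \<Longrightarrow> (x \<in> C \<longleftrightarrow> y \<in> C)"
  unfolding components_def using gconn_trans gconn_sym by blast

lemma own_comp: "k < n \<Longrightarrow> {v. gconn n A (k, True) v} \<in> components n A"
  unfolding components_def vertices_def by force

lemma own_comp_mem: "k < n \<Longrightarrow> (k, True) \<in> {v. gconn n A (k, True) v}"
  using gconn_refl[of "(k,True)" n A] by (auto simp: vertices_def)

lemma enum_ex: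
  assumes "bij_betw enum {..<r} (all_components n L M)" "k < n" "l < L"
  shows "\<exists>q<r. enum q = (l, {v. gconn n (M l) (k, True) v})"
proof -
  have "(l, {v. gconn n (M l) (k, True) v}) \<in> all_components n L M"
    using assms own_comp unfolding all_components_def by auto
  then show ?thesis using bij_betw_imp_surj_on[OF assms(1)] by force
qed

lemma enum_in:
  assumes "bij_betw enum {..<r} (all_components n L M)" "q < r"
  shows "fst (enum q) < L \<and> snd (enum q) \<in> components n (M (fst (enum q)))"
proof -
  have "enum q \<in> all_components n L M" using bij_betwE[OF assms(1)] assms(2) by auto
  then show ?thesis unfolding all_components_def by (cases "enum q") auto
qed



lemma sq_zero_vec:
  fixes w :: "real vec"
  assumes "w \<in> carrier_vec m" "w \<bullet> w = 0"
  shows "w = 0\<^sub>v m"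
proof -
  have "(\<Sum>i\<in>{0..<m}. w $ i * w $ i) = 0" using assms by (simp add: scalar_prod_def)
  then have "\<forall>i\<in>{0..<m}. w $ i * w $ i = 0"
    by (subst (asm) sum_nonneg_eq_0_iff) auto
  then show ?thesis using assms by (intro eq_vecI) auto
qed

lemma gram_invertible:
  fixes A :: "real mat"
  assumes A: "A \<in> carrier_mat m k" and G: "G \<in> carrier_mat k m" and GA: "G * A = 1\<^sub>m k"
  shows "det (transpose_mat A * A) \<noteq> 0"
proof
  assume "det (transpose_mat A * A) = 0"
  then obtain v where v: "v \<in> carrier_vec k" "v \<noteq> 0\<^sub>v k" "(transpose_mat A * A) *\<^sub>v v = 0\<^sub>v k"
    using det_0_iff_vec_prod_zero[of "transpose_mat A * A" k] A by auto
  have Av: "A *\<^sub>v v \<in> carrier_vec m" using A v by auto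
  have "transpose_mat A *\<^sub>v (A *\<^sub>v v) = 0\<^sub>v k" using v A by simp
  then have "(transpose_mat A *\<^sub>v (A *\<^sub>v v)) \<bullet> v = 0" using v by simp
  then have "(A *\<^sub>v v) \<bullet> (A *\<^sub>v v) = 0"
    using transpose_vec_mult_scalar[OF A v(1) Av] by simp
  then have "A *\<^sub>v v = 0\<^sub>v m" using sq_zero_vec Av by blast
  then have "G *\<^sub>v (A *\<^sub>v v) = 0\<^sub>v k" using G by (auto intro!: eq_vecI simp: scalar_prod_def)
  moreover have "G *\<^sub>v (A *\<^sub>v v) = v" using G A v GA
    by (metis assoc_mult_mat_vec one_mult_mat_vec)
  ultimately show False using v by simp
qed

definition pv :: "real mat \<Rightarrow> real mat \<Rightarrow> bool" where
  "pv A X \<longleftrightarrow> X \<in> carrier_mat (dim_col A) (dim_row A) \<and>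
      A * X * A = A \<and> X * A * X = X \<and>
      transpose_mat (A * X) = A * X \<and> transpose_mat (X * A) = X * A"

lemma pv_exists:
  fixes A :: "real mat"
  assumes A: "A \<in> carrier_mat m k" and G: "G \<in> carrier_mat k m" and GA: "G * A = 1\<^sub>m k"
  shows "\<exists>X. pv A X"
proof -
  define N where "N = transpose_mat A * A"
  have N: "N \<in> carrier_mat k k" using A N_def by auto
  have "N \<in> Units (ring_mat TYPE(real) k ())"
    using det_non_zero_imp_unit[OF N] gram_invertible[OF A G GA] N_def by auto
  then obtain Ni where Ni: "Ni \<in> carrier_mat k k" "Ni * N = 1\<^sub>m k" "N * Ni = 1\<^sub>m k"
    unfolding Units_def ring_mat_def by auto
  have NT: "transpose_mat N = N" unfolding N_def using A by (simp add: transpose_mult[OF _ A])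
  have "transpose_mat Ni * N = 1\<^sub>m k"
    using transpose_mult[OF N Ni(1)] Ni NT by simp
  then have NiT: "transpose_mat Ni = Ni"
    by (metis Ni(1) Ni(3) N assoc_mult_mat left_mult_one_mat right_mult_one_mat transpose_carrier_mat)
  define X where "X = Ni * transpose_mat A"
  have X: "X \<in> carrier_mat k m" using X_def Ni A by auto
  have XA: "X * A = 1\<^sub>m k" unfolding X_def using Ni A N_def by simp
  have AXA: "A * X * A = A" using XA A X by simp
  have XAX: "X * A * X = X" using XA X by simp
  have T1: "transpose_mat (A * X) = A * X"
  proof -
    have "transpose_mat (A * X) = transpose_mat X * transpose_mat A" using transpose_mult[OF A X] .
    also have "transpose_mat X = A * Ni" unfolding X_def
      using transpose_mult[of Ni k k "transpose_mat A" m] Ni A NiT by simp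
    also have "A * Ni * transpose_mat A = A * X" unfolding X_def using A Ni by simp
    finally show ?thesis .
  qed
  have T2: "transpose_mat (X * A) = X * A" using XA by simp
  show ?thesis unfolding pv_def using X AXA XAX T1 T2 A by (intro exI[of _ X]) auto
qed

lemma pv_unique:
  fixes A :: "real mat"
  assumes A: "A \<in> carrier_mat m k" and G: "G \<in> carrier_mat k m" and GA: "G * A = 1\<^sub>m k"
    and X: "pv A X" and Y: "pv A Y"
  shows "X = Y"
proof -
  have Xc: "X \<in> carrier_mat k m" and Yc: "Y \<in> carrier_mat k m" using X Y A unfolding pv_def by auto
  have left: "Z * A = 1\<^sub>m k" if "pv A Z" for Z
  proof -
    have Z: "Z \<in> carrier_mat k m" "A * Z * A = A" using that A unfolding pv_def by auto
    have ZA: "Z * A \<in> carrier_mat k k" using Z A by simp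
    have "(G * A) * (Z * A) = G * (A * (Z * A))" using assoc_mult_mat[OF G A ZA] .
    also have "A * (Z * A) = A" using Z A by simp
    finally have "(G * A) * (Z * A) = G * A" .
    then show ?thesis using GA Z A by simp
  qed
  have XA: "X * A = 1\<^sub>m k" and YA: "Y * A = 1\<^sub>m k" using left X Y by auto
  have TX: "transpose_mat (A * X) = A * X" and TY: "transpose_mat (A * Y) = A * Y"
    using X Y unfolding pv_def by auto
  have "A * X = transpose_mat (A * Y) * transpose_mat (A * X)" using TX TY
  proof -
    have "A * X = (A * Y * A) * X" using A Yc YA by simp
    also have "\<dots> = (A * Y) * (A * X)" using assoc_mult_mat[of "A * Y" m m A k X m] A Yc Xc by simp
    also have "\<dots> = transpose_mat (A * Y) * transpose_mat (A * X)" using TX TY by simp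
    finally show ?thesis .
  qed
  also have "\<dots> = transpose_mat ((A * X) * (A * Y))"
    using transpose_mult[of "A * X" m m "A * Y" m] A Xc Yc by simp
  also have "(A * X) * (A * Y) = A * Y"
  proof -
    have AY: "A * Y \<in> carrier_mat m m" using A Yc by simp
    have "(A * X) * (A * Y) = A * (X * (A * Y))" using assoc_mult_mat[OF A Xc AY] .
    also have "X * (A * Y) = (X * A) * Y" using assoc_mult_mat[OF Xc A Yc] by simp
    also have "\<dots> = Y" using XA Yc by simp
    finally show ?thesis .
  qed
  finally have AXY: "A * X = A * Y" using TY by simp
  have "Y = Y * A * Y" using Y unfolding pv_def by auto
  also have "\<dots> = Y * (A * X)" using AXY A Yc by simp
  also have "\<dots> = (Y * A) * X" using A Yc Xc by simp
  also have "\<dots> = X" using YA Xc by simp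
  finally show ?thesis by simp
qed

lemma pinv_props:
  fixes A :: "real mat"
  assumes A: "A \<in> carrier_mat m k" and G: "G \<in> carrier_mat k m" and GA: "G * A = 1\<^sub>m k"
  shows "pinv A \<in> carrier_mat k m \<and> pinv A * A = 1\<^sub>m k \<and> A * pinv A * A = A
     \<and> transpose_mat (A * pinv A) = A * pinv A"
proof -
  obtain X where X: "pv A X" using pv_exists[OF A G GA] by blast
  have pe: "pinv A = (THE X. pv A X)" unfolding pinv_def pv_def by simp
  have "pv A (pinv A)" unfolding pe
    by (rule theI[of "pv A" X, OF X], rule pv_unique[OF A G GA], assumption, rule X)
  then have P: "pinv A \<in> carrier_mat k m" "A * pinv A * A = A" "transpose_mat (A * pinv A) = A * pinv A"
    using A unfolding pv_def by auto
  have ZA: "pinv A * A \<in> carrier_mat k k" using P A by simp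
  have "(G * A) * (pinv A * A) = G * (A * (pinv A * A))" using assoc_mult_mat[OF G A ZA] .
  also have "A * (pinv A * A) = A" using P A by simp
  finally have "(G * A) * (pinv A * A) = G * A" .
  then show ?thesis using GA P A by simp
qed



lemma xi_entry: "q < r \<Longrightarrow> l < L \<Longrightarrow> Xi r L enum k $$ (q, l) =
   (if fst (enum q) = l \<and> (k, True) \<in> snd (enum q) then 1 else 0)"
  by (simp add: Xi_def)

lemma xi_carrier: "Xi r L enum k \<in> carrier_mat r L"
  by (simp add: Xi_def)

lemma xi_leftinv:
  assumes bij: "bij_betw enum {..<r} (all_components n L M)" and k: "k < n"
  shows "\<exists>G. G \<in> carrier_mat L r \<and> G * Xi r L enum k = 1\<^sub>m L"
proof -
  define qq where "qq l = (SOME q. q < r \<and> enum q = (l, {v. gconn n (M l) (k, True) v}))" for l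
  have qq: "qq l < r \<and> enum (qq l) = (l, {v. gconn n (M l) (k, True) v})" if "l < L" for l
    unfolding qq_def using someI_ex[OF enum_ex[OF bij k that]] by blast
  define G where "G = mat L r (\<lambda>(l, q). if q = qq l then 1 else (0::real))"
  have "G * Xi r L enum k = 1\<^sub>m L"
  proof (rule eq_matI)
    fix l m assume l: "l < dim_row (1\<^sub>m L :: real mat)" and m: "m < dim_col (1\<^sub>m L :: real mat)"
    then have l: "l < L" and m: "m < L" by auto
    have "(G * Xi r L enum k) $$ (l, m) = (\<Sum>q\<in>{0..<r}. (if q = qq l then 1 else 0) * Xi r L enum k $$ (q, m))"
      using l m by (simp add: G_def Xi_def scalar_prod_def)
    also have "\<dots> = (\<Sum>q\<in>{0..<r}. if q = qq l then Xi r L enum k $$ (q, m) else 0)"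
      by (rule sum.cong) auto
    also have "\<dots> = Xi r L enum k $$ (qq l, m)" using qq[OF l] by simp
    also have "\<dots> = (if l = m then 1 else 0)"
      using qq[OF l] m xi_entry[of "qq l" r m L enum k] own_comp_mem[OF k] by auto
    finally show "(G * Xi r L enum k) $$ (l, m) = 1\<^sub>m L $$ (l, m)" using l m by simp
  qed (auto simp: G_def Xi_def)
  moreover have "G \<in> carrier_mat L r" by (simp add: G_def)
  ultimately show ?thesis by blast
qed

lemma mat_inv_props:
  assumes R: "R \<in> carrier_mat r r" and inv: "invertible_mat (R :: real mat)"
  shows "mat_inv R \<in> carrier_mat r r \<and> R * mat_inv R = 1\<^sub>m r \<and> mat_inv R * R = 1\<^sub>m r"
proof -
  obtain B where B: "R * B = 1\<^sub>m (dim_row R)" "B * R = 1\<^sub>m (dim_row B)"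
    using inv unfolding invertible_mat_def inverts_mat_def by auto
  have Bc: "B \<in> carrier_mat r r"
    using B R by (metis carrier_matD carrier_matI index_mult_mat(2,3) index_one_mat(2,3))
  have B': "R * B = 1\<^sub>m r" "B * R = 1\<^sub>m r" using B R Bc by auto
  define P where "P C = (C \<in> carrier_mat r r \<and> R * C = 1\<^sub>m r \<and> C * R = 1\<^sub>m r)" for C
  have uq: "C = B" if "P C" for C
  proof -
    have C: "C \<in> carrier_mat r r" "R * C = 1\<^sub>m r" "C * R = 1\<^sub>m r" using that P_def by auto
    have "C = C * (R * B)" using B' C by simp
    also have "\<dots> = (C * R) * B" using assoc_mult_mat[OF C(1) R Bc] by simp
    also have "\<dots> = B" using C Bc by simp
    finally show ?thesis .
  qed
  have "mat_inv R = (THE C. P C)" unfolding mat_inv_def P_def using R by simp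
  moreover have "P (THE C. P C)"
    by (rule theI[of P B], unfold P_def, use Bc B' in simp, rule uq, simp add: P_def)
  ultimately show ?thesis unfolding P_def by simp
qed

lemma left_comp:
  fixes G R Ri Z :: "real mat"
  assumes "G \<in> carrier_mat L r" "R \<in> carrier_mat r r" "Ri \<in> carrier_mat r r" "Z \<in> carrier_mat r L"
    "G * Z = 1\<^sub>m L" "R * Ri = 1\<^sub>m r"
  shows "(G * R) * (Ri * Z) = 1\<^sub>m L"
proof -
  have "(G * R) * (Ri * Z) = G * (R * (Ri * Z))" using assoc_mult_mat[of G L r R r "Ri * Z" L] assms by simp
  also have "R * (Ri * Z) = (R * Ri) * Z" using assoc_mult_mat[of R r r Ri r Z L] assms by simp
  also have "\<dots> = Z" using assms by simp
  finally show ?thesis using assms by simp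
qed

theorem lemma3:
  fixes n L r :: nat
    and M :: "nat \<Rightarrow> real mat"
    and s :: "nat \<Rightarrow> nat \<Rightarrow> real"
    and enum :: "nat \<Rightarrow> nat \<times> (nat \<times> bool) set"
    and R :: "real mat"
    and i j :: nat
  assumes "mixture n L M s"
    and "companion_connected n L M"
    and "r = (\<Sum>l<L. card (components n (M l)))"
    and "bij_betw enum {..<r} (all_components n L M)"
    and "R \<in> carrier_mat r r" and "invertible_mat R"
    and "i < n" and "j < n"
  shows "is_inverse_of L
           (pinv (mat_inv R * Xi r L enum j) * (mat_inv R * Xi r L enum i))
           (pinv (mat_inv R * Xi r L enum i) * (mat_inv R * Xi r L enum j))
         \<longleftrightarrow> Xi r L enum i = Xi r L enum j"
proof -
  note bij = assms(4) and Rc = assms(5)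
  define Ri where "Ri = mat_inv R"
  have Ri: "Ri \<in> carrier_mat r r" "R * Ri = 1\<^sub>m r" "Ri * R = 1\<^sub>m r"
    using mat_inv_props[OF Rc assms(6)] Ri_def by auto
  define Xi' where "Xi' = Xi r L enum i"
  define Xj where "Xj = Xi r L enum j"
  have Xi'c: "Xi' \<in> carrier_mat r L" and Xjc: "Xj \<in> carrier_mat r L"
    unfolding Xi'_def Xj_def by (rule xi_carrier)+
  define A where "A = Ri * Xi'"
  define B where "B = Ri * Xj"
  have Ac: "A \<in> carrier_mat r L" and Bc: "B \<in> carrier_mat r L"
    unfolding A_def B_def using Ri Xi'c Xjc by auto
  obtain Gi where Gi: "Gi \<in> carrier_mat L r" "Gi * Xi' = 1\<^sub>m L"
    using xi_leftinv[OF bij assms(7)] Xi'_def by auto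
  obtain Gj where Gj: "Gj \<in> carrier_mat L r" "Gj * Xj = 1\<^sub>m L"
    using xi_leftinv[OF bij assms(8)] Xj_def by auto
  have GA: "(Gi * R) * A = 1\<^sub>m L" unfolding A_def using left_comp[OF Gi(1) Rc Ri(1) Xi'c Gi(2) Ri(2)] .
  have GB: "(Gj * R) * B = 1\<^sub>m L" unfolding B_def using left_comp[OF Gj(1) Rc Ri(1) Xjc Gj(2) Ri(2)] .
  define X where "X = pinv A"
  define Y where "Y = pinv B"
  have X: "X \<in> carrier_mat L r" "X * A = 1\<^sub>m L" "A * X * A = A" "transpose_mat (A * X) = A * X"
    using pinv_props[OF Ac _ GA] Gi Rc unfolding X_def by auto
  have Y: "Y \<in> carrier_mat L r" "Y * B = 1\<^sub>m L" "B * Y * B = B" "transpose_mat (B * Y) = B * Y"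
    using pinv_props[OF Bc _ GB] Gj Rc unfolding Y_def by auto
  have goal: "is_inverse_of L (Y * A) (X * B) \<longleftrightarrow> Xi' = Xj"
  proof
    assume "Xi' = Xj"
    then have "A = B" "X = Y" unfolding A_def B_def X_def Y_def by auto
    then show "is_inverse_of L (Y * A) (X * B)" unfolding is_inverse_of_def using X by simp
  next
    assume "is_inverse_of L (Y * A) (X * B)"
    then have YAXB: "(Y * A) * (X * B) = 1\<^sub>m L" unfolding is_inverse_of_def by auto
    define P where "P = A * X"
    have Pc: "P \<in> carrier_mat r r" unfolding P_def using Ac X by simp
    have PT: "transpose_mat P = P" using X P_def by simp
    have PP: "P * P = P"
    proof -
      have "P * P = (P * A) * X" unfolding P_def using assoc_mult_mat[of "A * X" r r A L X r] Ac X by simp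
      then show ?thesis using X P_def by simp
    qed
    have PBc: "P * B \<in> carrier_mat r L" using Pc Bc by simp
    define D where "D = B - P * B"
    have Dc: "D \<in> carrier_mat r L" unfolding D_def using Bc PBc by (simp add: minus_carrier_mat)
    have YD: "Y * D = 0\<^sub>m L L"
    proof -
      have "Y * D = Y * B - Y * (P * B)" unfolding D_def using mult_minus_distrib_mat[OF Y(1) Bc PBc] .
      also have "Y * (P * B) = (Y * A) * (X * B)"
      proof -
        have "Y * (P * B) = Y * (A * (X * B))" unfolding P_def
          using assoc_mult_mat[OF Ac X(1) Bc] by simp
        also have "\<dots> = (Y * A) * (X * B)" using assoc_mult_mat[of Y L r A L "X * B" L] Y(1) Ac X(1) Bc by simp
        finally show ?thesis .
      qed
      finally show ?thesis using YAXB Y(2) by simp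
    qed
    have BYc: "B * Y \<in> carrier_mat r r" using Bc Y by simp
    have BT: "transpose_mat B = transpose_mat B * (B * Y)"
    proof -
      have "transpose_mat B = transpose_mat ((B * Y) * B)" using Y by simp
      also have "\<dots> = transpose_mat B * transpose_mat (B * Y)" using transpose_mult[OF BYc Bc] .
      finally show ?thesis using Y(4) by simp
    qed
    have BTD: "transpose_mat B * D = 0\<^sub>m L L"
    proof -
      have "transpose_mat B * D = (transpose_mat B * (B * Y)) * D" using BT by simp
      also have "\<dots> = transpose_mat B * ((B * Y) * D)"
        using assoc_mult_mat[of "transpose_mat B" L r "B * Y" r D L] Bc BYc Dc by simp
      also have "(B * Y) * D = B * (Y * D)" using assoc_mult_mat[OF Bc Y(1) Dc] .
      also have "\<dots> = 0\<^sub>m r L" using YD Bc by simp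
      finally show ?thesis using Bc by simp
    qed
    have PD: "P * D = 0\<^sub>m r L"
    proof -
      have "P * D = P * B - P * (P * B)" unfolding D_def using mult_minus_distrib_mat[OF Pc Bc PBc] .
      also have "P * (P * B) = P * B" using assoc_mult_mat[OF Pc Pc Bc] PP by simp
      finally show ?thesis using PBc by simp
    qed
    have DTD: "transpose_mat D * D = 0\<^sub>m L L"
    proof -
      have DTc: "transpose_mat D \<in> carrier_mat L r" using Dc by simp
      have "transpose_mat D * D = transpose_mat D * B - transpose_mat D * (P * B)"
        unfolding D_def using mult_minus_distrib_mat[OF DTc Bc PBc] D_def by simp
      also have "transpose_mat D * B = 0\<^sub>m L L"
      proof -
        have "transpose_mat (transpose_mat B * D) = transpose_mat D * B"
          using transpose_mult[of "transpose_mat B" L r D L] Bc Dc by simp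
        then show ?thesis using BTD by simp
      qed
      also have "transpose_mat D * (P * B) = (transpose_mat D * P) * B"
        using assoc_mult_mat[OF DTc Pc Bc] by simp
      also have "transpose_mat D * P = 0\<^sub>m L r"
      proof -
        have "transpose_mat (P * D) = transpose_mat D * transpose_mat P" using transpose_mult[OF Pc Dc] .
        then show ?thesis using PD PT by simp
      qed
      finally show ?thesis using Bc by simp
    qed
    have D0: "D $$ (q, l) = 0" if q: "q < r" and l: "l < L" for q l
    proof -
      have cc: "col D l \<in> carrier_vec r" by (intro carrier_vecI) (use Dc in simp)
      have "(transpose_mat D * D) $$ (l, l) = col D l \<bullet> col D l" using Dc l by simp
      then have "col D l \<bullet> col D l = 0" using DTD l by simp
      then have "col D l = 0\<^sub>v r" by (rule sq_zero_vec[OF cc])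
      then have "col D l $ q = 0" using q by simp
      then show ?thesis using Dc q l by simp
    qed
    have BPB: "B = P * B"
    proof (rule eq_matI)
      fix q l assume "q < dim_row (P * B)" "l < dim_col (P * B)"
      then have q: "q < r" and l: "l < L" using Pc Bc by auto
      have "D $$ (q, l) = B $$ (q, l) - (P * B) $$ (q, l)" unfolding D_def by (rule index_minus_mat(1)) (use PBc q l in auto)
      then show "B $$ (q, l) = (P * B) $$ (q, l)" using D0[OF q l] by simp
    qed (simp_all add: carrier_matD[OF Bc] carrier_matD[OF Pc])
    define K where "K = X * B"
    have Kc: "K \<in> carrier_mat L L" unfolding K_def using X Bc by simp
    have XjK: "Xj = Xi' * K"
    proof -
      have "Xj = (R * Ri) * Xj" using Ri Xjc by simp
      also have "\<dots> = R * B" unfolding B_def using assoc_mult_mat[OF Rc Ri(1) Xjc] .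
      also have "B = A * K" unfolding K_def by (rule trans[OF BPB[unfolded P_def] assoc_mult_mat[OF Ac X(1) Bc]])
      also have "A * K = Ri * (Xi' * K)" unfolding A_def using assoc_mult_mat[OF Ri(1) Xi'c Kc] .
      also have "R * (Ri * (Xi' * K)) = (R * Ri) * (Xi' * K)"
        using assoc_mult_mat[of R r r Ri r "Xi' * K" L] Rc Ri Xi'c Kc by simp
      also have "\<dots> = Xi' * K" using Ri Xi'c Kc by simp
      finally show ?thesis .
    qed
    have inC: "(i, True) \<in> {v. gconn n (M l) (j, True) v}" if l: "l < L" for l
    proof (rule ccontr)
      assume nin: "(i, True) \<notin> {v. gconn n (M l) (j, True) v}"
      obtain q where q: "q < r" "enum q = (l, {v. gconn n (M l) (j, True) v})"
        using enum_ex[OF bij assms(8) l] by blast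
      have "Xj $$ (q, l) = 1"
        unfolding Xj_def using xi_entry[OF q(1) l] q own_comp_mem[OF assms(8)] by simp
      moreover have "(Xi' * K) $$ (q, l) = 0"
      proof -
        have "(Xi' * K) $$ (q, l) = (\<Sum>m\<in>{0..<L}. Xi' $$ (q, m) * K $$ (m, l))"
          using Xi'c Kc q l by (simp add: scalar_prod_def)
        also have "\<dots> = 0"
          by (rule sum.neutral) (use nin q in \<open>auto simp: Xi'_def xi_entry\<close>)
        finally show ?thesis .
      qed
      ultimately show False using XjK by simp
    qed
    show "Xi' = Xj"
    proof (rule eq_matI)
      fix q l assume "q < dim_row Xj" "l < dim_col Xj"
      then have q: "q < r" and l: "l < L" using Xjc by auto
      have gc: "gconn n (M l) (i, True) (j, True)" using inC[OF l] gconn_sym by blast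
      have "fst (enum q) = l \<Longrightarrow> ((i, True) \<in> snd (enum q) \<longleftrightarrow> (j, True) \<in> snd (enum q))"
        using enum_in[OF bij q] comp_iff[OF _ gc] by auto
      then show "Xi' $$ (q, l) = Xj $$ (q, l)"
        unfolding Xi'_def Xj_def xi_entry[OF q l] by auto
    qed (use Xi'c Xjc in auto)
  qed
  then show ?thesis unfolding Ri_def Xi'_def Xj_def A_def B_def X_def Y_def by simp
qed


end
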